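(* In the contention game with $k=2$ channels under acknowledgement-based feedback and $n\ge5$ players, the anonymous protocol $f^2$ (in every slot, regardless of history, a pending player transmits on each of the two channels with probability $1/2$ and never stays idle) is not an equilibrium protocol. In fact, when all other players use $f^2$, the protocol that does not transmit at $t=1$ and then follows $f^2$ gives any player strictly smaller expected latency than $f^2$.
   Context: Contention game: $n$ players, channels $K=\{1,\dots,k\}$, slots $t=1,2,\dots$; each player has one packet and is initially pending. In each slot a pending player chooses (possibly at random) an action in $\{0,1,\dots,k\}$ ($0$ = idle, $a$ = transmit on channel $a$). A lone transmitter on a channel succeeds and leaves; two or more transmitters on a channel collide and remain pending. Latency = slot of a player's successful transmission; players minimize expected latency. Acknowledgement-based feedback: only a player who attempted transmission learns whether she succeeded; decision rules depend only on the personal action history. An anonymous protocol is an equilibrium protocol if, when all players use it, no player at any slot and after any history can decrease her conditional expected latency by unilaterally deviating. *)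

theory Defs
  imports "HOL-Probability.Probability_Mass_Function"
begin

text \<open>Actions: 0 = idle, 1 = transmit on channel 1, 2 = transmit on channel 2.
  A pending player's personal history is the list of her own past actions
  (all her past transmissions failed, otherwise she would not be pending,
  so the feedback is determined by the actions).\<close>

type_synonym protocol = "nat list \<Rightarrow> nat pmf"

definition f2 :: protocol where
  "f2 h = pmf_of_set {1, 2}"

definition idle_first :: protocol where
  "idle_first h = (if h = [] then return_pmf 0 else pmf_of_set {1, 2})"

text \<open>Survival probability of a focal player who uses decision rule g while all
  other players use f^2.  surv g t h m is the probability that the
  focal player is still pending after t further slots, given that her history
  is h and m other players are currently pending.  In one slot each of the m
  others independently picks channel 1 or 2 with probability 1/2; j is the
  number of others on channel 1 (probability (m choose j)/2^m).  A lone
  transmitter on a channel succeeds and leaves.\<close>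
primrec surv :: "protocol \<Rightarrow> nat \<Rightarrow> nat list \<Rightarrow> nat \<Rightarrow> real" where
  "surv g 0 h m = 1"
| "surv g (Suc t) h m =
     (\<Sum>a\<in>{0::nat, 1, 2}. pmf (g h) a *
        (\<Sum>j\<le>m. real (m choose j) / 2 ^ m *
           (if a = 0 then
              surv g t (h @ [0])
                (m - (if j = 1 then 1 else 0) - (if m - j = 1 then 1 else 0))
            else if a = 1 then
              (if j = 0 then 0
               else surv g t (h @ [1]) (m - (if m - j = 1 then 1 else 0)))
            else
              (if m - j = 0 then 0
               else surv g t (h @ [2]) (m - (if j = 1 then 1 else 0))))))"

text \<open>Expected latency (slot of successful transmission, slots numbered from 1)
  of a player using g when the other n - 1 players use f^2:
  E[T] = sum over t \<ge> 0 of P(T > t).\<close>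
definition exp_latency :: "protocol \<Rightarrow> nat \<Rightarrow> ennreal" where
  "exp_latency g n = (\<Sum>t. ennreal (surv g t [] (n - 1)))"

end

theory Submission
  imports Defs
begin

definition S :: "nat \<Rightarrow> nat \<Rightarrow> real" where "S t m = surv f2 t [] m"
definition p :: "nat \<Rightarrow> nat \<Rightarrow> real" where "p m j = real (m choose j) / 2 ^ m"

lemma surv_f2_hist: "surv f2 t h m = surv f2 t h' m"
proof (induction t arbitrary: h h' m)
  case 0
  then show ?case by simp
next
  case (Suc t)
  have "\<And>a m. surv f2 t (h@[a]) m = surv f2 t (h'@[a]) m" by (rule Suc.IH)
  moreover have "f2 h = f2 h'" by (simp add: f2_def)
  ultimately show ?case by (simp only: surv.simps)
qed

lemma surv_idle_hist: "h \<noteq> [] \<Longrightarrow> surv idle_first t h m = surv f2 t h m"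
proof (induction t arbitrary: h m)
  case 0
  then show ?case by simp
next
  case (Suc t)
  have "idle_first h = f2 h" using Suc.prems by (simp add: idle_first_def f2_def)
  moreover have "\<And>a m. surv idle_first t (h@[a]) m = surv f2 t (h@[a]) m" by (simp add: Suc.IH)
  ultimately show ?case by (simp only: surv.simps)
qed

lemma surv_nonneg: "0 \<le> surv g t h m"
proof (induction t arbitrary: h m)
  case 0
  then show ?case by simp
next
  case (Suc t)
  show ?case unfolding surv.simps
    by (intro sum_nonneg mult_nonneg_nonneg) (auto simp: Suc.IH)
qed

lemma surv_f2_snoc: "surv f2 t (h@[a]) m = S t m"
  unfolding S_def by (rule surv_f2_hist)

lemma S_Suc: "S (Suc t) m = (\<Sum>j\<le>m. p m j * (if j = 0 then 0 else S t (m - (if m - j = 1 then 1 else 0))))/2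
   + (\<Sum>j\<le>m. p m j * (if m - j = 0 then 0 else S t (m - (if j = 1 then 1 else 0))))/2"
  unfolding p_def S_def[of "Suc t"]
  apply (simp only: surv.simps surv_f2_snoc)
  apply (simp add: f2_def pmf_of_set sum_divide_distrib)
  done

lemma sum_delta_mult: "c \<le> m \<Longrightarrow> (\<Sum>j\<le>(m::nat). f j * (if j = c then x else 0)) = f c * (x::real)"
proof -
  assume "c \<le> m"
  have "(\<Sum>j\<le>m. f j * (if j = c then x else 0)) = (\<Sum>j\<le>m. (if j = c then f j * x else 0))"
    by (rule sum.cong) auto
  also have "\<dots> = f c * x" using \<open>c \<le> m\<close> by (simp add: sum.delta sum.delta')
  finally show ?thesis .
qed

lemma sum_p: "(\<Sum>j\<le>m. p m j) = 1"
proof -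
  have "(\<Sum>j\<le>m. p m j) = (\<Sum>j\<le>m. real (m choose j)) / 2^m"
    unfolding p_def by (simp add: sum_divide_distrib)
  also have "(\<Sum>j\<le>m. real (m choose j)) = 2^m"
    using choose_row_sum[of m] by (metis of_nat_numeral of_nat_power of_nat_sum)
  finally show ?thesis by simp
qed

lemma p0: "p m 0 = 1/2^m" by (simp add: p_def)
lemma pm: "p m m = 1/2^m" by (simp add: p_def)
lemma p1: "p m 1 = m/2^m" by (simp add: p_def)
lemma pm1: "m \<ge> 1 \<Longrightarrow> p m (m-1) = m/2^m"
  using binomial_symmetric[of 1 m] by (simp add: p_def)

lemma S_rec: assumes "m \<ge> 2"
  shows "S (Suc t) m = (1 - (real m+1)/2^m) * S t m + m/2^m * S t (m-1)"
proof -
  have A: "(\<Sum>j\<le>m. p m j * (if j = 0 then 0 else S t (m - (if m - j = 1 then 1 else 0))))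
     = (\<Sum>j\<le>m. p m j * S t m - p m j * (if j = 0 then S t m else 0)
            + p m j * (if j = m - 1 then S t (m-1) - S t m else 0))"
    using assms by (intro sum.cong) (auto simp: algebra_simps)
  also have "\<dots> = S t m - p m 0 * S t m + p m (m-1) * (S t (m-1) - S t m)"
    by (simp only: sum.distrib sum_subtractf sum_delta_mult sum_distrib_right[symmetric] sum_p; simp)
  finally have A': "(\<Sum>j\<le>m. p m j * (if j = 0 then 0 else S t (m - (if m - j = 1 then 1 else 0))))
      = S t m - S t m / 2^m + m/2^m * (S t (m-1) - S t m)" using assms pm1[of m, simplified] by (simp add: p0)
  have B: "(\<Sum>j\<le>m. p m j * (if m - j = 0 then 0 else S t (m - (if j = 1 then 1 else 0))))
     = (\<Sum>j\<le>m. p m j * S t m - p m j * (if j = m then S t m else 0)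
            + p m j * (if j = 1 then S t (m-1) - S t m else 0))"
    using assms by (intro sum.cong) (auto simp: algebra_simps)
  also have "\<dots> = S t m - p m m * S t m + p m 1 * (S t (m-1) - S t m)"
    using assms by (simp only: sum.distrib sum_subtractf sum_delta_mult sum_distrib_right[symmetric] sum_p; simp)
  finally have B': "(\<Sum>j\<le>m. p m j * (if m - j = 0 then 0 else S t (m - (if j = 1 then 1 else 0))))
      = S t m - S t m / 2^m + m/2^m * (S t (m-1) - S t m)" using assms p1[of m, simplified] by (simp add: pm)
  show ?thesis unfolding S_Suc A' B' by (simp add: field_simps)
qed

lemma S_0: "S 0 m = 1" by (simp add: S_def)

lemma S_nonneg: "0 \<le> S t m" unfolding S_def by (rule surv_nonneg)

lemma S_one: "S t 1 = (1/2)^t"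
proof (induction t)
  case 0
  then show ?case by (simp add: S_0)
next
  case (Suc t)
  have "S (Suc t) 1 = S t 1 / 2"
    unfolding S_Suc by (simp add: atMost_Suc p_def)
  then show ?case using Suc by simp
qed

lemma pow_ge: "real m + 1 \<le> (2::real)^m"
proof (induction m)
  case 0
  then show ?case by simp
next
  case (Suc m)
  then show ?case by simp
qed

lemma S_geom: assumes "m \<ge> 1" shows "S t m \<le> (1 - 1/2^m)^t"
  using assms
proof (induction m arbitrary: t rule: nat_induct_at_least)
  case base
  then show ?case using S_one[of t] by simp
next
  case (Suc m)
  note outer = Suc.IH
  show ?case
  proof (induction t)
    case 0
    then show ?case by (simp add: S_0)
  next
    case (Suc t)
    define q where "q = 1 - (real (Suc m) + 1)/2^(Suc m)"
    define r where "r = real (Suc m) / 2^(Suc m)"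
    define \<rho> where "\<rho> = 1 - 1/(2::real)^(Suc m)"
    have q0: "q \<ge> 0" unfolding q_def using pow_ge[of "Suc m"] by (simp add: field_simps)
    have r0: "r \<ge> 0" unfolding r_def by simp
    have qr: "q + r = \<rho>" unfolding q_def r_def \<rho>_def by (simp add: field_simps)
    have rho_m: "0 \<le> 1 - 1/(2::real)^m" "1 - 1/(2::real)^m \<le> \<rho>"
      unfolding \<rho>_def by (auto simp: field_simps)
    have "S (Suc t) (Suc m) = q * S t (Suc m) + r * S t m"
      using S_rec[of "Suc m" t] \<open>1 \<le> m\<close> unfolding q_def r_def by simp
    also have "\<dots> \<le> q * \<rho>^t + r * \<rho>^t"
    proof (intro add_mono mult_left_mono q0 r0)
      show "S t (Suc m) \<le> \<rho> ^ t" using Suc.IH unfolding \<rho>_def by simp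
      have "S t m \<le> (1 - 1/2^m)^t" using outer by simp
      also have "\<dots> \<le> \<rho>^t" by (intro power_mono rho_m)
      finally show "S t m \<le> \<rho> ^ t" .
    qed
    also have "\<dots> = \<rho>^Suc t" using qr by (simp add: distrib_right[symmetric])
    finally show ?case unfolding \<rho>_def .
  qed
qed

lemma summable_S: assumes "m \<ge> 1" shows "summable (\<lambda>t. S t m)"
proof (rule summable_comparison_test')
  show "summable (\<lambda>t. (1 - 1/(2::real)^m)^t)"
    by (rule summable_geometric) (simp add: field_simps)
  show "norm (S t m) \<le> (1 - 1/(2::real)^m)^t" for t
    using S_geom[OF assms, of t] S_nonneg[of t m] by simp
qed

definition E :: "nat \<Rightarrow> real" where "E m = (\<Sum>t. S t m)"

lemma sums_E: "m \<ge> 1 \<Longrightarrow> (\<lambda>t. S t m) sums E m"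
  unfolding E_def by (rule summable_sums[OF summable_S])

lemma E_rec: assumes "m \<ge> 2"
  shows "E m = 1 + (1 - (real m+1)/2^m) * E m + m/2^m * E (m-1)"
proof -
  have a: "(\<lambda>t. S (Suc t) m) sums (E m - 1)"
    using sums_E[of m] assms sums_Suc_iff[of "\<lambda>t. S t m" "E m - 1"] by (simp add: S_0)
  have b': "(\<lambda>t. S (Suc t) m) sums ((1 - (real m+1)/2^m) * E m + m/2^m * E (m-1))"
    unfolding S_rec[OF assms] using assms by (intro sums_add sums_mult sums_E) auto
  have "E m - 1 = (1 - (real m+1)/2^m) * E m + m/2^m * E (m-1)"
    using sums_unique2[OF a b'] .
  then show ?thesis by simp
qed

lemma E_one: "E 1 = 2"
proof -
  have "(\<lambda>t. (1/2::real)^t) sums (1 / (1 - 1/2))" by (rule geometric_sums) simp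
  then show ?thesis unfolding E_def S_one by (simp add: sums_iff)
qed

lemma E_bound: assumes "m \<ge> 2" shows "E m \<le> 2^(m+1)/(real m+1)"
  using assms
proof (induction m rule: nat_induct_at_least)
  case base
  have "E 2 = 1 + (1 - 3/4) * E 2 + 2/4 * E 1" using E_rec[of 2] by simp
  then have "E 2 = 8/3" using E_one by (simp add: numeral_eq_Suc)
  then show ?case by simp
next
  case (Suc m)
  define X :: real where "X = 2^Suc m"
  have X0: "X > 0" unfolding X_def by simp
  have r: "E (Suc m) = 1 + (1 - (real (Suc m)+1)/X) * E (Suc m) + real (Suc m)/X * E m"
    using E_rec[of "Suc m"] Suc.hyps unfolding X_def by simp
  have r2: "(real (Suc m)+1)/X * E (Suc m) = 1 + real (Suc m)/X * E m"
    using r by (simp add: algebra_simps)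
  have "(real (Suc m) + 1) * E (Suc m) = X * ((real (Suc m)+1)/X * E (Suc m))"
    using X0 by simp
  also have "\<dots> = X * (1 + real (Suc m)/X * E m)"
    using r2 by simp
  also have "\<dots> = X + real (Suc m) * E m" using X0 by (simp add: distrib_left)
  finally have eq: "(real (Suc m) + 1) * E (Suc m) = X + real (Suc m) * E m" .
  have "E m \<le> X / real (Suc m)" using Suc.IH unfolding X_def by (simp add: add.commute)
  then have "real (Suc m) * E m \<le> X" by (simp add: field_simps)
  then have "(real (Suc m) + 1) * E (Suc m) \<le> 2 * X" using eq by simp
  then have "E (Suc m) \<le> 2 * X / (real (Suc m) + 1)" by (simp add: field_simps)
  then show ?case unfolding X_def by simp
qed

lemma surv_idle_snoc: "surv idle_first t (h@[a]) m = S t m"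
  using surv_idle_hist[of "h@[a]" t m] surv_f2_hist[of t "h@[a]" m "[]"] unfolding S_def by simp

definition I :: "nat \<Rightarrow> nat \<Rightarrow> real" where "I t m = surv idle_first t [] m"

lemma sum3: "(\<Sum>a\<in>{0::nat,1,2}. f a) = f 0 + f 1 + f 2" by (simp add: add.assoc)

lemma I_Suc: "I (Suc t) m = (\<Sum>j\<le>m. p m j * S t (m - (if j = 1 then 1 else 0) - (if m - j = 1 then 1 else 0)))"
  unfolding I_def p_def
  apply (simp only: surv.simps surv_idle_snoc sum3)
  apply (simp add: idle_first_def)
  done

lemma I_rec: assumes "m \<ge> 3"
  shows "I (Suc t) m = S t m + 2*real m/2^m * (S t (m-1) - S t m)"
proof -
  have "I (Suc t) m = (\<Sum>j\<le>m. p m j * S t m + p m j * (if j = 1 then S t (m-1) - S t m else 0)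
      + p m j * (if j = m - 1 then S t (m-1) - S t m else 0))"
    unfolding I_Suc using assms by (intro sum.cong) (auto simp: algebra_simps)
  also have "\<dots> = S t m + p m 1 * (S t (m-1) - S t m) + p m (m-1) * (S t (m-1) - S t m)"
    using assms by (simp only: sum.distrib sum_delta_mult sum_distrib_right[symmetric] sum_p; simp)
  also have "\<dots> = S t m + 2*real m/2^m * (S t (m-1) - S t m)"
  proof -
    have pmm1: "p m (m-1) = m/2^m" using assms by (intro pm1) simp
    show ?thesis unfolding p1 pmm1 by (simp add: field_simps)
  qed
  finally show ?thesis .
qed

lemma I_0: "I 0 m = 1" by (simp add: I_def)

theorem corollary2:
  fixes n :: nat
  assumes "n \<ge> 5"
  shows "exp_latency idle_first n < exp_latency f2 n"
proof -
  define m where "m = n - 1"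
  have m4: "m \<ge> 4" using assms unfolding m_def by simp
  define X :: real where "X = 2^m"
  have X0: "X > 0" unfolding X_def by simp
  define c where "c = 2 * real m / X"
  have f2_eq: "exp_latency f2 n = ennreal (E m)"
    unfolding exp_latency_def m_def[symmetric] E_def S_def[symmetric]
    by (rule suminf_ennreal2[OF S_nonneg summable_S]) (use m4 in simp)
  have irec: "I (Suc t) m = S t m + 2*real m/2^m * (S t (m-1) - S t m)" for t
    using I_rec[of m t] m4 by simp
  have a: "(\<lambda>t. I (Suc t) m) sums (E m + c * (E (m-1) - E m))"
    unfolding irec c_def X_def
    using m4 by (intro sums_add sums_mult sums_diff sums_E) auto
  have b: "(\<lambda>t. I t m) sums (E m + c * (E (m-1) - E m) + 1)"
    using a sums_Suc_iff[of "\<lambda>t. I t m"] by (simp add: I_0)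
  have idle_eq: "exp_latency idle_first n = ennreal (E m + c * (E (m-1) - E m) + 1)"
    unfolding exp_latency_def m_def[symmetric] I_def[symmetric]
    by (rule suminf_ennreal_eq[OF _ b]) (simp add: I_def surv_nonneg)
  have r: "E m = 1 + (1 - (real m + 1)/X) * E m + real m/X * E (m-1)"
    using E_rec[of m] m4 unfolding X_def by simp
  have r2: "(real m+1)/X * E m = 1 + real m/X * E (m-1)"
    using r by (simp add: algebra_simps)
  have "(real m + 1) * E m = X * ((real m+1)/X * E m)"
    using X0 by simp
  also have "\<dots> = X * (1 + real m/X * E (m-1))"
    using r2 by simp
  also have "\<dots> = X + real m * E (m-1)" using X0 by (simp add: distrib_left)
  finally have eq: "(real m + 1) * E m = X + real m * E (m-1)" .
  have bd: "E (m-1) \<le> X / real m"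
    using E_bound[of "m-1"] m4 unfolding X_def by (simp add: of_nat_diff)
  then have bd2: "real m * E (m-1) \<le> X" using m4 by (simp add: field_simps)
  have mX: "real m * X \<ge> 4 * X" using m4 X0 by (intro mult_right_mono) auto
  define D where "D = E (m-1) - E m"
  have "(real m + 1) * D = E (m-1) - X"
    unfolding D_def using eq by (simp add: algebra_simps)
  have key: "(real m + 1) * (X + 2 * real m * D) < 0"
  proof -
    have "(real m + 1) * (X + 2 * real m * D) = (real m + 1) * X + 2 * real m * ((real m + 1) * D)"
      by (simp add: algebra_simps)
    also have "\<dots> = (real m + 1) * X + 2 * real m * (E (m-1) - X)"
      using \<open>(real m + 1) * D = E (m-1) - X\<close> by simp
    also have "\<dots> = real m * X + X + 2 * (real m * E (m-1)) - 2 * (real m * X)"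
      by (simp add: algebra_simps)
    also have "\<dots> < 0" using bd2 mX X0 by linarith
    finally show ?thesis .
  qed
  then have "X + 2 * real m * D < 0"
    by (simp add: mult_less_0_iff)
  then have "(X + 2 * real m * D) / X < 0" using X0 by (simp add: divide_neg_pos)
  then have "1 + c * D < 0" unfolding c_def using X0 by (simp add: field_simps)
  then have lt: "E m + c * (E (m-1) - E m) + 1 < E m" unfolding D_def by simp
  have nn: "0 \<le> E m + c * (E (m-1) - E m) + 1"
    by (rule sums_le[OF _ sums_zero b]) (simp add: I_def surv_nonneg)
  show ?thesis unfolding f2_eq idle_eq using lt nn by (simp add: ennreal_less_iff)
qed

end
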